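(* Let $k\ge 1$. For $j=1,\dots,k$ let $c_{a,j},c_{c,j}>0$, let $r_{a,j}:(0,\infty)\to(0,\infty)$ be positive, decreasing and at least twice continuously differentiable, and let $r_{c,j}:(0,\infty)\to(0,\infty)$ be positive, increasing and at least twice continuously differentiable. Let $w_j:(0,\infty)\to(0,\infty)$ and $\rho_j:(0,\infty)\to[-1,1]$ be given functions with $1-\rho_j^2(n)\le c_{a,j}r_{a,j}(n)$ and $w_j(n)\le c_{c,j}r_{c,j}(n)$; set $n_0^*=0$, $w_0(n_0^* )=1$. For a budget $p$, define sequentially: $u_1(n_1)=\frac{1}{p-n_1}\big(c_{a,1}r_{a,1}(n_1)+c_{c,1}r_{c,1}(n_1)\big)$ on $[1,p-1]$ with unique minimizer $n_1^*$, and for $j=2,\dots,k$, $$u_j(n_j)=\frac{1}{p_{j-1}-n_j}\Big(\kappa_{j-1}+\hat c_{a,j}r_{a,j}(n_j)+c_{c,j}r_{c,j}(n_j)\Big)\ \text{on } [1,p_{j-1}-1],$$ with unique minimizer $n_j^*$, where $p_{j-1}=p-\sum_{i=1}^{j-1}n_i^*$, $\kappa_{j-1}=\sum_{i=0}^{j-2}w_i(n_i^* )(1-\rho_{i+1}^2(n_{i+1}^* ))$, $\hat c_{a,j}=w_{j-1}(n_{j-1}^* )c_{a,j}$ (so $\hat c_{a,1}=c_{a,1}$). Assume that for each $j=1,\dots,k$, $$\hat c_{a,j}\,r_{a,j}''(n)+c_{c,j}\,r_{c,j}''(n)>0\quad\text{for all } n\in(0,\infty),$$ and that there exists $\bar n_j\in(0,\infty)$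 with $$\hat c_{a,j}\,r_{a,j}'(\bar n_j)+c_{c,j}\,r_{c,j}'(\bar n_j)=0.$$ Then there exist bounds $\bar n_1^*,\dots,\bar n_k^*$, independent of the budget $p$, such that $n_j^*\le \bar n_j^*$ for $j=1,\dots,k$.
   Context: Here $n_j$ is the number of high-fidelity evaluations used to train the $j$-th low-fidelity model in a context-aware multi-fidelity Monte Carlo estimator, $p$ is the total budget in units of high-fidelity evaluations, and $u_j$ is (up to constant factors) an upper bound of the estimator's mean-squared error in $n_j$ with the previously chosen $n_1^*,\dots,n_{j-1}^*$ fixed; the budgets are assumed large enough that all intervals $[1,p_{j-1}-1]$ are nonempty, and under the convexity hypotheses each $u_j$ has a unique minimizer $n_j^*$ there. *)

theory Defs
  imports "HOL-Analysis.Analysis"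
begin

text \<open>Sequential context-aware multi-fidelity allocation.
  Index j ranges over 1..k; ns j is the chosen n_j^* (ns 0 is unused, n_0^* = 0).\<close>

definition wst :: "(nat \<Rightarrow> real \<Rightarrow> real) \<Rightarrow> (nat \<Rightarrow> real) \<Rightarrow> nat \<Rightarrow> real" where
  "wst w ns i = (if i = 0 then 1 else w i (ns i))"

definition chat :: "(nat \<Rightarrow> real) \<Rightarrow> (nat \<Rightarrow> real \<Rightarrow> real) \<Rightarrow> (nat \<Rightarrow> real) \<Rightarrow> nat \<Rightarrow> real" where
  "chat ca w ns j = wst w ns (j - 1) * ca j"

definition kappa :: "(nat \<Rightarrow> real \<Rightarrow> real) \<Rightarrow> (nat \<Rightarrow> real \<Rightarrow> real) \<Rightarrow> (nat \<Rightarrow> real) \<Rightarrow> nat \<Rightarrow> real" where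
  "kappa w rho ns m = (\<Sum>i<m. wst w ns i * (1 - (rho (Suc i) (ns (Suc i)))\<^sup>2))"

definition pbud :: "real \<Rightarrow> (nat \<Rightarrow> real) \<Rightarrow> nat \<Rightarrow> real" where
  "pbud p ns m = p - (\<Sum>i\<in>{1..m}. ns i)"

definition uobj :: "(nat \<Rightarrow> real) \<Rightarrow> (nat \<Rightarrow> real) \<Rightarrow> (nat \<Rightarrow> real \<Rightarrow> real) \<Rightarrow> (nat \<Rightarrow> real \<Rightarrow> real)
    \<Rightarrow> (nat \<Rightarrow> real \<Rightarrow> real) \<Rightarrow> (nat \<Rightarrow> real \<Rightarrow> real) \<Rightarrow> real \<Rightarrow> (nat \<Rightarrow> real) \<Rightarrow> nat \<Rightarrow> real \<Rightarrow> real" where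
  "uobj ca cc ra rc w rho p ns j x =
     (kappa w rho ns (j - 1) + chat ca w ns j * ra j x + cc j * rc j x) / (pbud p ns (j - 1) - x)"

definition opt_seq :: "nat \<Rightarrow> (nat \<Rightarrow> real) \<Rightarrow> (nat \<Rightarrow> real) \<Rightarrow> (nat \<Rightarrow> real \<Rightarrow> real) \<Rightarrow> (nat \<Rightarrow> real \<Rightarrow> real)
    \<Rightarrow> (nat \<Rightarrow> real \<Rightarrow> real) \<Rightarrow> (nat \<Rightarrow> real \<Rightarrow> real) \<Rightarrow> real \<Rightarrow> (nat \<Rightarrow> real) \<Rightarrow> bool" where
  "opt_seq k ca cc ra rc w rho p ns =
     (\<forall>j\<in>{1..k}.
        1 \<le> pbud p ns (j - 1) - 1 \<and>
        1 \<le> ns j \<and> ns j \<le> pbud p ns (j - 1) - 1 \<and>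
        (\<forall>x. 1 \<le> x \<and> x \<le> pbud p ns (j - 1) - 1 \<and> x \<noteq> ns j \<longrightarrow>
              uobj ca cc ra rc w rho p ns j (ns j) < uobj ca cc ra rc w rho p ns j x))"

end

theory Submission imports Defs begin

lemma min_deriv:
  fixes g :: "real \<Rightarrow> real"
  assumes "1 < y" "y \<le> Q - 1"
    and mn: "\<forall>x. 1 \<le> x \<and> x \<le> Q - 1 \<and> x \<noteq> y \<longrightarrow> g y / (Q - y) < g x / (Q - x)"
    and d: "(g has_real_derivative d) (at y)" and gp: "g y > 0"
  shows "d < 0"
proof -
  define u where "u = g y / (Q - y)"
  have Qy: "Q - y > 0" using assms by simp
  have up: "u > 0" using gp Qy by (simp add: u_def)
  have dd: "((\<lambda>x. g x - u * (Q - x)) has_real_derivative d + u) (at y)"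
    using d by (auto intro!: derivative_eq_intros)
  have "d + u \<le> 0"
  proof (rule ccontr)
    assume "\<not> d + u \<le> 0"
    then obtain e where e: "e > 0" "\<forall>h>0. h < e \<longrightarrow> g (y - h) - u * (Q - (y - h)) < g y - u * (Q - y)"
      using DERIV_pos_inc_left[OF dd] by force
    define h where "h = min (e/2) (y - 1)"
    have h: "h > 0" "h < e" "h \<le> y - 1" using e assms by (auto simp: h_def)
    have lt: "g (y - h) - u * (Q - (y - h)) < 0"
      using e(2) h Qy by (simp add: u_def)
    have "u < g (y - h) / (Q - (y - h))"
      using mn[rule_format, of "y - h"] h assms unfolding u_def by auto
    hence "u * (Q - (y - h)) < g (y - h)" using Qy h by (simp add: field_simps)
    thus False using lt by simp
  qed
  thus ?thesis using up by simp
qed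

lemma deriv_nonpos_dec:
  fixes f :: "real \<Rightarrow> real"
  assumes dec: "\<forall>x y. 0 < x \<and> x \<le> y \<longrightarrow> f y \<le> f x" and x: "x > 0"
    and d: "(f has_real_derivative l) (at x)"
  shows "l \<le> 0"
proof (rule ccontr)
  assume "\<not> l \<le> 0"
  then obtain e where e: "e > 0" "\<forall>h>0. h < e \<longrightarrow> f x < f (x + h)"
    using DERIV_pos_inc_right[OF d] by force
  have "f x < f (x + e/2)" using e by simp
  moreover have "f (x + e/2) \<le> f x" using dec x e by simp
  ultimately show False by simp
qed

lemma key:
  fixes ra rad radd rcd rcdd :: "real \<Rightarrow> real" and C Aa Ab Nn Amax y :: real
  assumes ra_pos: "\<forall>x>0. ra x > 0"
    and ra_d1: "\<forall>x>0. (ra has_real_derivative rad x) (at x)"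
    and ra_d2: "\<forall>x>0. (rad has_real_derivative radd x) (at x)"
    and rc_d2: "\<forall>x>0. (rcd has_real_derivative rcdd x) (at x)"
    and ra1_np: "\<forall>x>0. rad x \<le> 0"
    and Aa: "Aa > 0" and Nn: "Nn > 0"
    and conv1: "\<forall>x>0. Aa * radd x + C * rcdd x > 0"
    and zero: "Aa * rad Nn + C * rcd Nn = 0"
    and Ab: "Ab \<le> Amax"
    and conv2: "\<forall>x>0. Ab * radd x + C * rcdd x > 0"
    and y: "y > Nn + 1"
    and neg: "Ab * rad y + C * rcd y < 0"
  shows "y \<le> Nn + 1 + Amax * ra (Nn + 1) / (Aa * rad (Nn + 1) + C * rcd (Nn + 1))"
proof -
  define f1 where "f1 = (\<lambda>x. Aa * rad x + C * rcd x)"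
  define f2 where "f2 = (\<lambda>x. Ab * rad x + C * rcd x)"
  have inc1: "f1 a < f1 b" if "0 < a" "a < b" for a b
  proof (rule DERIV_pos_imp_increasing[OF that(2)])
    fix x assume "a \<le> x" "x \<le> b"
    hence xp: "x > 0" using that by simp
    have "(f1 has_real_derivative Aa * radd x + C * rcdd x) (at x)"
      unfolding f1_def using ra_d2 rc_d2 xp by (auto intro!: derivative_eq_intros)
    thus "\<exists>y. (f1 has_real_derivative y) (at x) \<and> y > 0" using conv1 xp by blast
  qed
  have inc2: "f2 a < f2 b" if "0 < a" "a < b" for a b
  proof (rule DERIV_pos_imp_increasing[OF that(2)])
    fix x assume "a \<le> x" "x \<le> b"
    hence xp: "x > 0" using that by simp
    have "(f2 has_real_derivative Ab * radd x + C * rcdd x) (at x)"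
      unfolding f2_def using ra_d2 rc_d2 xp by (auto intro!: derivative_eq_intros)
    thus "\<exists>y. (f2 has_real_derivative y) (at x) \<and> y > 0" using conv2 xp by blast
  qed
  define c1 where "c1 = f1 (Nn + 1)"
  have c1: "c1 > 0" using inc1[of Nn "Nn+1"] Nn zero by (simp add: c1_def f1_def)
  have f1ge: "f1 x \<ge> c1" if "x \<ge> Nn + 1" for x
    using inc1[of "Nn+1" x] that Nn by (cases "x = Nn + 1") (auto simp: c1_def)
  have f2neg: "f2 x < 0" if "0 < x" "x \<le> y" for x
    using inc2[of x y] that neg by (cases "x = y") (auto simp: f2_def)
  have "f2 (Nn + 1) < 0" using f2neg Nn y by simp
  hence "(Ab - Aa) * rad (Nn + 1) < - c1" by (simp add: c1_def f1_def f2_def algebra_simps)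
  hence Aab: "Ab > Aa"
  proof -
    assume h: "(Ab - Aa) * rad (Nn + 1) < - c1"
    show ?thesis
    proof (rule ccontr)
      assume "\<not> Ab > Aa"
      hence "(Ab - Aa) * rad (Nn + 1) \<ge> 0" using ra1_np Nn by (intro mult_nonpos_nonpos) auto
      thus False using h c1 by simp
    qed
  qed
  define G where "G = (\<lambda>x. (Ab - Aa) * ra x + c1 * x)"
  have "G y \<le> G (Nn + 1)"
  proof (rule DERIV_nonpos_imp_nonincreasing[of "Nn+1" y G])
    show "Nn + 1 \<le> y" using y by simp
    fix x assume x: "Nn + 1 \<le> x" "x \<le> y"
    have xp: "x > 0" using x Nn by simp
    have "(G has_real_derivative (Ab - Aa) * rad x + c1) (at x)"
      unfolding G_def using ra_d1 xp by (auto intro!: derivative_eq_intros)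
    moreover have "(Ab - Aa) * rad x + c1 \<le> 0"
      using f1ge[OF x(1)] f2neg[OF xp x(2)] by (simp add: f1_def f2_def algebra_simps)
    ultimately show "\<exists>d. (G has_real_derivative d) (at x) \<and> d \<le> 0" by blast
  qed
  hence "(Ab - Aa) * ra y + c1 * y \<le> (Ab - Aa) * ra (Nn + 1) + c1 * (Nn + 1)" by (simp add: G_def)
  moreover have "(Ab - Aa) * ra y > 0" using Aab ra_pos y Nn by simp
  moreover have "(Ab - Aa) * ra (Nn + 1) \<le> Amax * ra (Nn + 1)"
    using Ab Aa ra_pos[rule_format, of "Nn+1"] Nn by (intro mult_right_mono) auto
  ultimately have "c1 * y \<le> Amax * ra (Nn + 1) + c1 * (Nn + 1)" by linarith
  hence "y \<le> (Amax * ra (Nn + 1) + c1 * (Nn + 1)) / c1" using c1 by (simp add: field_simps)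
  also have "\<dots> = Nn + 1 + Amax * ra (Nn + 1) / c1" using c1 by (simp add: field_simps)
  finally show ?thesis by (simp add: c1_def f1_def)
qed

theorem proposition4:
  fixes k :: nat
    and ca cc :: "nat \<Rightarrow> real"
    and ra ra1 ra2 rc rc1 rc2 w rho :: "nat \<Rightarrow> real \<Rightarrow> real"
  assumes k: "k \<ge> 1"
    and c_pos: "\<forall>j\<in>{1..k}. ca j > 0 \<and> cc j > 0"
    and ra_pos: "\<forall>j\<in>{1..k}. \<forall>x>0. ra j x > 0"
    and ra_dec: "\<forall>j\<in>{1..k}. \<forall>x y. 0 < x \<and> x \<le> y \<longrightarrow> ra j y \<le> ra j x"
    and ra_d1: "\<forall>j\<in>{1..k}. \<forall>x>0. (ra j has_real_derivative ra1 j x) (at x)"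
    and ra_d2: "\<forall>j\<in>{1..k}. \<forall>x>0. (ra1 j has_real_derivative ra2 j x) (at x)"
    and ra_c2: "\<forall>j\<in>{1..k}. continuous_on {0<..} (ra2 j)"
    and rc_pos: "\<forall>j\<in>{1..k}. \<forall>x>0. rc j x > 0"
    and rc_inc: "\<forall>j\<in>{1..k}. \<forall>x y. 0 < x \<and> x \<le> y \<longrightarrow> rc j x \<le> rc j y"
    and rc_d1: "\<forall>j\<in>{1..k}. \<forall>x>0. (rc j has_real_derivative rc1 j x) (at x)"
    and rc_d2: "\<forall>j\<in>{1..k}. \<forall>x>0. (rc1 j has_real_derivative rc2 j x) (at x)"
    and rc_c2: "\<forall>j\<in>{1..k}. continuous_on {0<..} (rc2 j)"
    and w_pos: "\<forall>j\<in>{1..k}. \<forall>x>0. w j x > 0"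
    and rho_bd: "\<forall>j\<in>{1..k}. \<forall>x>0. -1 \<le> rho j x \<and> rho j x \<le> 1"
    and rho_ra: "\<forall>j\<in>{1..k}. \<forall>x>0. 1 - (rho j x)\<^sup>2 \<le> ca j * ra j x"
    and w_rc: "\<forall>j\<in>{1..k}. \<forall>x>0. w j x \<le> cc j * rc j x"
    and convex_stat: "\<forall>p ns. opt_seq k ca cc ra rc w rho p ns \<longrightarrow>
           (\<forall>j\<in>{1..k}.
              (\<forall>x>0. chat ca w ns j * ra2 j x + cc j * rc2 j x > 0) \<and>
              (\<exists>nb>0. chat ca w ns j * ra1 j nb + cc j * rc1 j nb = 0))"
  shows "\<exists>B :: nat \<Rightarrow> real. \<forall>p ns. opt_seq k ca cc ra rc w rho p ns \<longrightarrow>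
           (\<forall>j\<in>{1..k}. ns j \<le> B j)"
proof -
  have os: "1 \<le> ns j \<and> ns j \<le> pbud p ns (j - 1) - 1 \<and>
        (\<forall>x. 1 \<le> x \<and> x \<le> pbud p ns (j - 1) - 1 \<and> x \<noteq> ns j \<longrightarrow>
              uobj ca cc ra rc w rho p ns j (ns j) < uobj ca cc ra rc w rho p ns j x)"
    if "opt_seq k ca cc ra rc w rho p ns" "j \<in> {1..k}" for p ns j
    using that unfolding opt_seq_def by blast
  have wst_pos: "wst w ns i > 0" if "opt_seq k ca cc ra rc w rho p ns" "i < k" for p ns i
  proof (cases "i = 0")
    case True thus ?thesis by (simp add: wst_def)
  next
    case False
    hence i: "i \<in> {1..k}" using that by auto
    have "ns i \<ge> 1" using os[OF that(1) i] by simp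
    thus ?thesis using w_pos i False by (simp add: wst_def)
  qed
  have chat_pos: "chat ca w ns j > 0" if "opt_seq k ca cc ra rc w rho p ns" "j \<in> {1..k}" for p ns j
    using wst_pos[OF that(1), of "j - 1"] that(2) c_pos by (auto simp: chat_def)
  have kappa_nn: "kappa w rho ns (j - 1) \<ge> 0" if "opt_seq k ca cc ra rc w rho p ns" "j \<in> {1..k}" for p ns j
    unfolding kappa_def
  proof (rule sum_nonneg)
    fix i assume i: "i \<in> {..<j - 1}"
    have "wst w ns i > 0" using wst_pos[OF that(1), of i] i that(2) by auto
    moreover have si: "Suc i \<in> {1..k}" using i that(2) by auto
    have "ns (Suc i) \<ge> 1" using os[OF that(1) si] by simp
    hence "\<bar>rho (Suc i) (ns (Suc i))\<bar> \<le> 1" using rho_bd si by (simp add: abs_le_iff)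
    hence "(rho (Suc i) (ns (Suc i)))\<^sup>2 \<le> 1" by (simp add: abs_square_le_1)
    ultimately show "0 \<le> wst w ns i * (1 - (rho (Suc i) (ns (Suc i)))\<^sup>2)" by simp
  qed
  have bound: "\<exists>b. \<forall>p ns. opt_seq k ca cc ra rc w rho p ns \<longrightarrow> ns j \<le> b"
    if j: "j \<in> {1..k}" and Am: "\<forall>p ns. opt_seq k ca cc ra rc w rho p ns \<longrightarrow> chat ca w ns j \<le> Amax"
    for j Amax
  proof (cases "\<exists>p ns. opt_seq k ca cc ra rc w rho p ns")
    case False thus ?thesis by blast
  next
    case True
    then obtain p0 ns0 where o0: "opt_seq k ca cc ra rc w rho p0 ns0" by blast
    define A1 where "A1 = chat ca w ns0 j"
    have A1: "A1 > 0" using chat_pos[OF o0 j] by (simp add: A1_def)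
    have conv1: "\<forall>x>0. A1 * ra2 j x + cc j * rc2 j x > 0"
      using convex_stat o0 j by (simp add: A1_def)
    obtain N1 where N1: "N1 > 0" "A1 * ra1 j N1 + cc j * rc1 j N1 = 0"
      using convex_stat o0 j unfolding A1_def by blast
    have ra1_np: "\<forall>x>0. ra1 j x \<le> 0"
      using deriv_nonpos_dec[of "ra j"] ra_dec ra_d1 j by blast
    define bb where "bb = N1 + 1 + Amax * ra j (N1 + 1) / (A1 * ra1 j (N1 + 1) + cc j * rc1 j (N1 + 1))"
    show ?thesis
    proof (intro exI allI impI)
      fix p ns assume o: "opt_seq k ca cc ra rc w rho p ns"
      show "ns j \<le> max (N1 + 1) bb"
      proof (cases "ns j \<le> N1 + 1")
        case True thus ?thesis by simp
      next
        case False
        define A2 where "A2 = chat ca w ns j"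
        define Q where "Q = pbud p ns (j - 1)"
        define K where "K = kappa w rho ns (j - 1)"
        define g where "g = (\<lambda>x. K + A2 * ra j x + cc j * rc j x)"
        have A2: "A2 > 0" using chat_pos[OF o j] by (simp add: A2_def)
        have K: "K \<ge> 0" using kappa_nn[OF o j] by (simp add: K_def)
        have y1: "ns j > 1" using False N1 by simp
        have ueq: "uobj ca cc ra rc w rho p ns j x = g x / (Q - x)" for x
          by (simp add: uobj_def g_def Q_def K_def A2_def)
        have oj: "ns j \<le> Q - 1"
            "\<forall>x. 1 \<le> x \<and> x \<le> Q - 1 \<and> x \<noteq> ns j \<longrightarrow> g (ns j) / (Q - ns j) < g x / (Q - x)"
          using os[OF o j] unfolding ueq Q_def by auto
        have gd: "(g has_real_derivative A2 * ra1 j (ns j) + cc j * rc1 j (ns j)) (at (ns j))"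
        proof -
          have "(ra j has_real_derivative ra1 j (ns j)) (at (ns j))" using ra_d1 j y1 by simp
          moreover have "(rc j has_real_derivative rc1 j (ns j)) (at (ns j))" using rc_d1 j y1 by simp
          ultimately show ?thesis unfolding g_def by (auto intro!: derivative_eq_intros)
        qed
        have gp: "g (ns j) > 0"
          using K A2 ra_pos rc_pos c_pos j y1 unfolding g_def
          by (smt (verit, best) mult_pos_pos)
        have neg: "A2 * ra1 j (ns j) + cc j * rc1 j (ns j) < 0"
          using min_deriv[OF y1 oj(1) oj(2) gd gp] .
        have conv2: "\<forall>x>0. A2 * ra2 j x + cc j * rc2 j x > 0"
          using convex_stat o j by (simp add: A2_def)
        have "ns j \<le> bb" unfolding bb_def
          apply (rule key[where ra="ra j" and rad="ra1 j" and radd="ra2 j" and rcd="rc1 j" and rcdd="rc2 j" and Aa=A1 and C="cc j" and Nn=N1 and Ab=A2 and Amax=Amax and y="ns j"])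
          using ra_pos ra_d1 ra_d2 rc_d2 j ra1_np A1 N1 conv1 Am o conv2 False neg
          by (auto simp: A2_def)
        thus ?thesis by simp
      qed
    qed
  qed
  have ind: "\<forall>j. 1 \<le> j \<and> j \<le> k \<longrightarrow> (\<exists>b. \<forall>p ns. opt_seq k ca cc ra rc w rho p ns \<longrightarrow> ns j \<le> b)"
  proof (intro allI)
    fix j show "1 \<le> j \<and> j \<le> k \<longrightarrow> (\<exists>b. \<forall>p ns. opt_seq k ca cc ra rc w rho p ns \<longrightarrow> ns j \<le> b)"
    proof (induction j)
      case 0 thus ?case by simp
    next
      case (Suc j)
      show ?case
      proof
        assume sj: "1 \<le> Suc j \<and> Suc j \<le> k"
        hence sjk: "Suc j \<in> {1..k}" by simp
        show "\<exists>b. \<forall>p ns. opt_seq k ca cc ra rc w rho p ns \<longrightarrow> ns (Suc j) \<le> b"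
        proof (cases "j = 0")
          case True
          show ?thesis
            by (rule bound[OF sjk, of "ca 1"]) (simp add: True chat_def wst_def)
        next
          case False
          hence jk: "j \<in> {1..k}" using sj by simp
          then obtain b where b: "\<forall>p ns. opt_seq k ca cc ra rc w rho p ns \<longrightarrow> ns j \<le> b"
            using Suc.IH by auto
          show ?thesis
          proof (rule bound[OF sjk, of "cc j * rc j (max b 1) * ca (Suc j)"], intro allI impI)
            fix p ns assume o: "opt_seq k ca cc ra rc w rho p ns"
            have n1: "ns j \<ge> 1" using os[OF o jk] by simp
            have "w j (ns j) \<le> cc j * rc j (ns j)" using w_rc jk n1 by simp
            also have "\<dots> \<le> cc j * rc j (max b 1)"
            proof (rule mult_left_mono)
              have "ns j \<le> max b 1" using b o by fastforce
              thus "rc j (ns j) \<le> rc j (max b 1)" using rc_inc jk n1 by simp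
              show "0 \<le> cc j" using c_pos jk by fastforce
            qed
            finally have "w j (ns j) * ca (Suc j) \<le> cc j * rc j (max b 1) * ca (Suc j)"
              using c_pos sjk by (intro mult_right_mono) fastforce+
            thus "chat ca w ns (Suc j) \<le> cc j * rc j (max b 1) * ca (Suc j)"
              using False by (simp add: chat_def wst_def)
          qed
        qed
      qed
    qed
  qed
  hence "\<forall>j\<in>{1..k}. \<exists>b. \<forall>p ns. opt_seq k ca cc ra rc w rho p ns \<longrightarrow> ns j \<le> b" by auto
  then obtain B where "\<forall>j\<in>{1..k}. \<forall>p ns. opt_seq k ca cc ra rc w rho p ns \<longrightarrow> ns j \<le> B j"
    by metis
  thus ?thesis by blast
qed

end
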